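(* On finite open graphs, the relation $\preceq$ is a well-founded, confluent partial order up to graph isomorphism. That is: (i) $G \preceq G$; if $K \preceq H$ and $H \preceq G$ then $K \preceq G$; if $H \preceq G$ and $G \preceq H$ then $G \cong H$; (ii) there is no infinite sequence $G_0 \succ G_1 \succ G_2 \succ \cdots$ in which each $G_{i+1} \preceq G_i$ with $G_{i+1} \not\cong G_i$; (iii) if $H_1 \preceq G$ and $H_2 \preceq G$, then there is an open graph $K$ with $K \preceq H_1$ and $K \preceq H_2$.
   Context: A pre-open graph $G$ consists of a set $E_G$ of edges, two disjoint sets $V_G$ (vertices) and $\epsilon_G$ (edge points), and two maps $s_G, t_G : E_G \to V_G \sqcup \epsilon_G$ (source and target). A morphism $f: G \to H$ of pre-open graphs consists of a map $E_G \to E_H$ and a map $V_G \sqcup \epsilon_G \to V_H \sqcup \epsilon_H$ sending $V_G$ into $V_H$ and $\epsilon_G$ into $\epsilon_H$, commuting with sources and targets. A pre-open graph is an open graph if the restriction of $s_G$ to $s_G^{-1}(\epsilon_G)$ and the restriction of $t_G$ to $t_G^{-1}(\epsilon_G)$ are injective (so each edge point has at most one incoming and at most one outgoing edge). It is finite if $E_G, V_G, \epsilon_G$ are finite. Contraction: given an edge point $p$ with an in-edge $e_1$ from $x_1$ to $p$ and an out-edge $e_2 \neq e_1$ from $p$ to $x_2$ (where $x_1,x_2 \in V_G \sqcup \epsilon_G$ need not be distinct), one may replace $e_1, p, e_2$ by a single new edge $e_3$ from $x_1$ to $x_2$. We say $G$ contracts to $H$, written $H \preceq G$, if $H$ is isomorphic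 to a graph obtained from $G$ by performing any number (possibly zero) of such replacements. *)

theory Defs
  imports Main
begin

record ('e, 'v) pgraph =
  edges :: "'e set"
  verts :: "'v set"
  epts  :: "'v set"
  src   :: "'e \<Rightarrow> 'v"
  tgt   :: "'e \<Rightarrow> 'v"

definition nodes :: "('e, 'v) pgraph \<Rightarrow> 'v set" where
  "nodes G = verts G \<union> epts G"

definition pre_open_graph :: "('e, 'v) pgraph \<Rightarrow> bool" where
  "pre_open_graph G \<longleftrightarrow> verts G \<inter> epts G = {}
     \<and> (\<forall>e\<in>edges G. src G e \<in> nodes G \<and> tgt G e \<in> nodes G)"

definition open_graph :: "('e, 'v) pgraph \<Rightarrow> bool" where
  "open_graph G \<longleftrightarrow> pre_open_graph G
     \<and> inj_on (src G) {e\<in>edges G. src G e \<in> epts G}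
     \<and> inj_on (tgt G) {e\<in>edges G. tgt G e \<in> epts G}"

definition finite_graph :: "('e, 'v) pgraph \<Rightarrow> bool" where
  "finite_graph G \<longleftrightarrow> finite (edges G) \<and> finite (verts G) \<and> finite (epts G)"

definition graph_iso :: "('e, 'v) pgraph \<Rightarrow> ('e, 'v) pgraph \<Rightarrow> bool" where
  "graph_iso G H \<longleftrightarrow> (\<exists>fE fN.
     bij_betw fE (edges G) (edges H) \<and> bij_betw fN (nodes G) (nodes H)
     \<and> fN ` verts G \<subseteq> verts H \<and> fN ` epts G \<subseteq> epts H
     \<and> (\<forall>e\<in>edges G. fN (src G e) = src H (fE e) \<and> fN (tgt G e) = tgt H (fE e)))"

definition contract_step :: "('e, 'v) pgraph \<Rightarrow> ('e, 'v) pgraph \<Rightarrow> bool" where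
  "contract_step G G' \<longleftrightarrow> (\<exists>p e1 e2 e3.
     p \<in> epts G \<and> e1 \<in> edges G \<and> e2 \<in> edges G \<and> e1 \<noteq> e2
     \<and> tgt G e1 = p \<and> src G e2 = p
     \<and> e3 \<notin> edges G - {e1, e2}
     \<and> G' = \<lparr> edges = (edges G - {e1, e2}) \<union> {e3},
              verts = verts G,
              epts = epts G - {p},
              src = (src G)(e3 := src G e1),
              tgt = (tgt G)(e3 := tgt G e2) \<rparr>)"

definition contracts_to :: "('e, 'v) pgraph \<Rightarrow> ('e, 'v) pgraph \<Rightarrow> bool" (infix "\<preceq>\<^sub>c" 50) where
  "H \<preceq>\<^sub>c G \<longleftrightarrow> (\<exists>G'. contract_step\<^sup>*\<^sup>* G G' \<and> graph_iso H G')"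

definition fin_open_graph :: "('e, 'v) pgraph \<Rightarrow> bool" where
  "fin_open_graph G \<longleftrightarrow> open_graph G \<and> finite_graph G"

end

theory Submission
  imports Defs
begin


definition cond :: "('e,'v) pgraph \<Rightarrow> 'v \<Rightarrow> 'e \<Rightarrow> 'e \<Rightarrow> 'e \<Rightarrow> bool" where
  "cond G p e1 e2 e3 \<longleftrightarrow> p \<in> epts G \<and> e1 \<in> edges G \<and> e2 \<in> edges G \<and> e1 \<noteq> e2
     \<and> tgt G e1 = p \<and> src G e2 = p \<and> e3 \<notin> edges G - {e1, e2}"

definition res :: "('e,'v) pgraph \<Rightarrow> 'v \<Rightarrow> 'e \<Rightarrow> 'e \<Rightarrow> 'e \<Rightarrow> ('e,'v) pgraph" where
  "res G p e1 e2 e3 = \<lparr> edges = (edges G - {e1, e2}) \<union> {e3},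
              verts = verts G,
              epts = epts G - {p},
              src = (src G)(e3 := src G e1),
              tgt = (tgt G)(e3 := tgt G e2) \<rparr>"

lemma step_iff: "contract_step G G' \<longleftrightarrow> (\<exists>p e1 e2 e3. cond G p e1 e2 e3 \<and> G' = res G p e1 e2 e3)"
  unfolding contract_step_def cond_def res_def by blast

lemma res_sel[simp]:
  "edges (res G p e1 e2 e3) = insert e3 (edges G - {e1, e2})"
  "verts (res G p e1 e2 e3) = verts G"
  "epts (res G p e1 e2 e3) = epts G - {p}"
  "src (res G p e1 e2 e3) = (src G)(e3 := src G e1)"
  "tgt (res G p e1 e2 e3) = (tgt G)(e3 := tgt G e2)"
  by (auto simp: res_def)

lemma open_facts:
  assumes "open_graph G"
  shows "verts G \<inter> epts G = {}" "\<And>e. e \<in> edges G \<Longrightarrow> src G e \<in> verts G \<union> epts G"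
    "\<And>e. e \<in> edges G \<Longrightarrow> tgt G e \<in> verts G \<union> epts G"
    "\<And>e e'. e \<in> edges G \<Longrightarrow> e' \<in> edges G \<Longrightarrow> src G e \<in> epts G \<Longrightarrow> src G e = src G e' \<Longrightarrow> e = e'"
    "\<And>e e'. e \<in> edges G \<Longrightarrow> e' \<in> edges G \<Longrightarrow> tgt G e \<in> epts G \<Longrightarrow> tgt G e = tgt G e' \<Longrightarrow> e = e'"
  using assms unfolding open_graph_def pre_open_graph_def nodes_def inj_on_def
  by auto

lemma step_open:
  assumes og: "open_graph G" and c: "cond G p e1 e2 e3"
  shows "open_graph (res G p e1 e2 e3)"
proof -
  note o = open_facts[OF og]
  from c have c': "p \<in> epts G" "e1 \<in> edges G" "e2 \<in> edges G" "e1 \<noteq> e2" "tgt G e1 = p" "src G e2 = p" "e3 \<notin> edges G - {e1, e2}"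
    unfolding cond_def by auto
  have s1: "src G e1 \<noteq> p" using o(4)[of e1 e2] c' by auto
  have t2: "tgt G e2 \<noteq> p" using o(5)[of e2 e1] c' by auto
  have so: "src G e \<noteq> p" if "e \<in> edges G" "e \<noteq> e2" for e using o(4)[of e e2] c' that by auto
  have to: "tgt G e \<noteq> p" if "e \<in> edges G" "e \<noteq> e1" for e using o(5)[of e e1] c' that by auto
  show ?thesis
    unfolding open_graph_def pre_open_graph_def nodes_def
  proof (intro conjI)
    show "verts (res G p e1 e2 e3) \<inter> epts (res G p e1 e2 e3) = {}" using o(1) by auto
  next
    show "\<forall>e\<in>edges (res G p e1 e2 e3). src (res G p e1 e2 e3) e \<in> verts (res G p e1 e2 e3) \<union> epts (res G p e1 e2 e3)
        \<and> tgt (res G p e1 e2 e3) e \<in> verts (res G p e1 e2 e3) \<union> epts (res G p e1 e2 e3)"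
    proof
      fix e assume "e \<in> edges (res G p e1 e2 e3)"
      then have "e = e3 \<or> (e \<noteq> e3 \<and> e \<in> edges G \<and> e \<noteq> e1 \<and> e \<noteq> e2)" by auto
      then show "src (res G p e1 e2 e3) e \<in> verts (res G p e1 e2 e3) \<union> epts (res G p e1 e2 e3)
        \<and> tgt (res G p e1 e2 e3) e \<in> verts (res G p e1 e2 e3) \<union> epts (res G p e1 e2 e3)"
        using o(2)[of e1] o(3)[of e2] o(2)[of e] o(3)[of e] s1 t2 so[of e] to[of e] c' by auto
    qed
  next
    show "inj_on (src (res G p e1 e2 e3)) {e \<in> edges (res G p e1 e2 e3). src (res G p e1 e2 e3) e \<in> epts (res G p e1 e2 e3)}"
    proof (rule inj_onI)
      fix x y assume x: "x \<in> {e \<in> edges (res G p e1 e2 e3). src (res G p e1 e2 e3) e \<in> epts (res G p e1 e2 e3)}"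
        and y: "y \<in> {e \<in> edges (res G p e1 e2 e3). src (res G p e1 e2 e3) e \<in> epts (res G p e1 e2 e3)}"
        and xy: "src (res G p e1 e2 e3) x = src (res G p e1 e2 e3) y"
      define g where "g e = (if e = e3 then e1 else e)" for e
      have gx: "g x \<in> edges G" "src G (g x) = src (res G p e1 e2 e3) x" using x c' by (auto simp: g_def)
      have gy: "g y \<in> edges G" "src G (g y) = src (res G p e1 e2 e3) y" using y c' by (auto simp: g_def)
      have "g x = g y" using o(4)[OF gx(1) gy(1)] gx gy xy x by auto
      then show "x = y" using x y c' by (auto simp: g_def split: if_splits)
    qed
  next
    show "inj_on (tgt (res G p e1 e2 e3)) {e \<in> edges (res G p e1 e2 e3). tgt (res G p e1 e2 e3) e \<in> epts (res G p e1 e2 e3)}"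
    proof (rule inj_onI)
      fix x y assume x: "x \<in> {e \<in> edges (res G p e1 e2 e3). tgt (res G p e1 e2 e3) e \<in> epts (res G p e1 e2 e3)}"
        and y: "y \<in> {e \<in> edges (res G p e1 e2 e3). tgt (res G p e1 e2 e3) e \<in> epts (res G p e1 e2 e3)}"
        and xy: "tgt (res G p e1 e2 e3) x = tgt (res G p e1 e2 e3) y"
      define g where "g e = (if e = e3 then e2 else e)" for e
      have gx: "g x \<in> edges G" "tgt G (g x) = tgt (res G p e1 e2 e3) x" using x c' by (auto simp: g_def)
      have gy: "g y \<in> edges G" "tgt G (g y) = tgt (res G p e1 e2 e3) y" using y c' by (auto simp: g_def)
      have "g x = g y" using o(5)[OF gx(1) gy(1)] gx gy xy x by auto
      then show "x = y" using x y c' by (auto simp: g_def split: if_splits)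
    qed
  qed
qed

lemma step_finite:
  assumes f: "finite_graph G" and c: "cond G p e1 e2 e3"
  shows "finite_graph (res G p e1 e2 e3) \<and> card (edges (res G p e1 e2 e3)) < card (edges G)"
proof -
  from c have c': "e1 \<in> edges G" "e2 \<in> edges G" "e1 \<noteq> e2" "e3 \<notin> edges G - {e1, e2}"
    unfolding cond_def by auto
  have fe: "finite (edges G)" using f by (simp add: finite_graph_def)
  have "card (insert e3 (edges G - {e1, e2})) = Suc (card (edges G - {e1, e2}))"
    using fe c' by (simp add: card_insert_if)
  moreover have "card (edges G - {e1, e2}) = card (edges G) - 2" using fe c' by (simp add: card_Diff_subset)
  moreover have "card (edges G) \<ge> 2"
  proof -
    have "card {e1,e2} \<le> card (edges G)" using fe c' by (intro card_mono) auto
    then show ?thesis using c' by simp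
  qed
  ultimately show ?thesis using f unfolding finite_graph_def by auto
qed

lemma iso_refl: "graph_iso G G"
  unfolding graph_iso_def by (rule exI[of _ id], rule exI[of _ id]) auto

lemma iso_trans: assumes "graph_iso G H" "graph_iso H K" shows "graph_iso G K"
proof -
  obtain f g where fg: "bij_betw f (edges G) (edges H)" "bij_betw g (nodes G) (nodes H)"
     "g ` verts G \<subseteq> verts H" "g ` epts G \<subseteq> epts H"
     "\<forall>e\<in>edges G. g (src G e) = src H (f e) \<and> g (tgt G e) = tgt H (f e)"
    using assms(1) unfolding graph_iso_def by blast
  obtain f' g' where fg': "bij_betw f' (edges H) (edges K)" "bij_betw g' (nodes H) (nodes K)"
     "g' ` verts H \<subseteq> verts K" "g' ` epts H \<subseteq> epts K"
     "\<forall>e\<in>edges H. g' (src H e) = src K (f' e) \<and> g' (tgt H e) = tgt K (f' e)"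
    using assms(2) unfolding graph_iso_def by blast
  show ?thesis unfolding graph_iso_def
    apply (rule exI[of _ "f' \<circ> f"], rule exI[of _ "g' \<circ> g"])
    using fg fg' by (auto simp: image_subset_iff bij_betw_apply intro: bij_betw_trans)
qed

lemma iso_sym: assumes "graph_iso G H" "open_graph G" "open_graph H" shows "graph_iso H G"
proof -
  obtain f g where fg: "bij_betw f (edges G) (edges H)" "bij_betw g (nodes G) (nodes H)"
     "g ` verts G \<subseteq> verts H" "g ` epts G \<subseteq> epts H"
     "\<forall>e\<in>edges G. g (src G e) = src H (f e) \<and> g (tgt G e) = tgt H (f e)"
    using assms(1) unfolding graph_iso_def by blast
  note oG = open_facts[OF assms(2)] and oH = open_facts[OF assms(3)]
  define f' where "f' = inv_into (edges G) f"
  define g' where "g' = inv_into (nodes G) g"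
  have b1: "bij_betw f' (edges H) (edges G)" unfolding f'_def by (rule bij_betw_inv_into[OF fg(1)])
  have b2: "bij_betw g' (nodes H) (nodes G)" unfolding g'_def by (rule bij_betw_inv_into[OF fg(2)])
  have v: "g' ` verts H \<subseteq> verts G"
  proof
    fix x assume "x \<in> g' ` verts H"
    then obtain y where y: "y \<in> verts H" "x = g' y" by auto
    have yn: "y \<in> nodes H" using y by (simp add: nodes_def)
    have xn: "x \<in> nodes G" "g x = y" using y b2 yn fg(2) unfolding g'_def
      by (auto simp: bij_betw_apply bij_betw_inv_into_right)
    show "x \<in> verts G"
    proof (rule ccontr)
      assume "x \<notin> verts G" then have "x \<in> epts G" using xn by (simp add: nodes_def)
      then have "y \<in> epts H" using fg(4) xn by auto
      then show False using y oH(1) by auto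
    qed
  qed
  have ep: "g' ` epts H \<subseteq> epts G"
  proof
    fix x assume "x \<in> g' ` epts H"
    then obtain y where y: "y \<in> epts H" "x = g' y" by auto
    have yn: "y \<in> nodes H" using y by (simp add: nodes_def)
    have xn: "x \<in> nodes G" "g x = y" using y b2 yn fg(2) unfolding g'_def
      by (auto simp: bij_betw_apply bij_betw_inv_into_right)
    show "x \<in> epts G"
    proof (rule ccontr)
      assume "x \<notin> epts G" then have "x \<in> verts G" using xn by (simp add: nodes_def)
      then have "y \<in> verts H" using fg(3) xn by auto
      then show False using y oH(1) by auto
    qed
  qed
  have st: "\<forall>e\<in>edges H. g' (src H e) = src G (f' e) \<and> g' (tgt H e) = tgt G (f' e)"
  proof
    fix e assume e: "e \<in> edges H"
    have d: "f' e \<in> edges G" "f (f' e) = e" using e b1 fg(1) unfolding f'_def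
      by (auto simp: bij_betw_apply bij_betw_inv_into_right)
    have "src G (f' e) \<in> nodes G" "tgt G (f' e) \<in> nodes G" using oG(2,3)[OF d(1)] by (auto simp: nodes_def)
    then show "g' (src H e) = src G (f' e) \<and> g' (tgt H e) = tgt G (f' e)"
      using fg(5) d fg(2) unfolding g'_def
      by (metis bij_betw_inv_into_left)
  qed
  show ?thesis unfolding graph_iso_def using b1 b2 v ep st by blast
qed

lemma iso_step:
  assumes oG: "open_graph G" and oH: "open_graph H" and iso: "graph_iso G H" and c: "cond G p e1 e2 e3"
  shows "\<exists>H'. contract_step H H' \<and> graph_iso (res G p e1 e2 e3) H'"
proof -
  obtain f g where fg: "bij_betw f (edges G) (edges H)" "bij_betw g (nodes G) (nodes H)"
     "g ` verts G \<subseteq> verts H" "g ` epts G \<subseteq> epts H"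
     "\<forall>e\<in>edges G. g (src G e) = src H (f e) \<and> g (tgt G e) = tgt H (f e)"
    using iso unfolding graph_iso_def by blast
  note oG' = open_facts[OF oG] and oH' = open_facts[OF oH]
  from c have c': "p \<in> epts G" "e1 \<in> edges G" "e2 \<in> edges G" "e1 \<noteq> e2" "tgt G e1 = p" "src G e2 = p" "e3 \<notin> edges G - {e1, e2}"
    unfolding cond_def by auto
  have injf: "inj_on f (edges G)" using fg(1) by (simp add: bij_betw_def)
  have injg: "inj_on g (nodes G)" using fg(2) by (simp add: bij_betw_def)
  have imf: "f ` edges G = edges H" using fg(1) by (simp add: bij_betw_def)
  have img: "g ` nodes G = nodes H" using fg(2) by (simp add: bij_betw_def)
  have pn: "p \<in> nodes G" using c' by (simp add: nodes_def)
  have cH: "cond H (g p) (f e1) (f e2) (f e1)"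
    unfolding cond_def using c' fg(4,5) injf imf
    by (auto simp: inj_on_def)
  define f' where "f' = f(e3 := f e1)"
  have bf: "bij_betw f' (edges (res G p e1 e2 e3)) (edges (res H (g p) (f e1) (f e2) (f e1)))"
    unfolding bij_betw_def
  proof
    show "inj_on f' (edges (res G p e1 e2 e3))"
      unfolding inj_on_def f'_def using injf c' by (auto simp: inj_on_def)
    show "f' ` edges (res G p e1 e2 e3) = edges (res H (g p) (f e1) (f e2) (f e1))"
    proof -
      have "f ` (edges G - {e1,e2}) = edges H - {f e1, f e2}"
        using injf imf c' by (auto simp: inj_on_def)
      moreover have "f' ` (edges G - {e1,e2}) = f ` (edges G - {e1,e2})"
        unfolding f'_def using c' by auto
      moreover have "f' e3 = f e1" by (simp add: f'_def)
      ultimately show ?thesis by (simp only: res_sel image_insert)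
    qed
  qed
  have ng: "nodes (res G p e1 e2 e3) = nodes G - {p}" using oG'(1) c' by (auto simp: nodes_def)
  have gp: "g p \<in> epts H" using fg(4) c' by auto
  have nh: "nodes (res H (g p) (f e1) (f e2) (f e1)) = nodes H - {g p}" using oH'(1) gp by (auto simp: nodes_def)
  have bg: "bij_betw g (nodes (res G p e1 e2 e3)) (nodes (res H (g p) (f e1) (f e2) (f e1)))"
    unfolding ng nh bij_betw_def using injg img pn
    by (auto simp: inj_on_def)
  have v: "g ` verts (res G p e1 e2 e3) \<subseteq> verts (res H (g p) (f e1) (f e2) (f e1))" using fg(3) by simp
  have ep: "g ` epts (res G p e1 e2 e3) \<subseteq> epts (res H (g p) (f e1) (f e2) (f e1))"
    using fg(4) injg pn by (auto simp: inj_on_def nodes_def)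
  have st: "\<forall>e\<in>edges (res G p e1 e2 e3). g (src (res G p e1 e2 e3) e) = src (res H (g p) (f e1) (f e2) (f e1)) (f' e)
     \<and> g (tgt (res G p e1 e2 e3) e) = tgt (res H (g p) (f e1) (f e2) (f e1)) (f' e)"
  proof
    fix e assume e: "e \<in> edges (res G p e1 e2 e3)"
    show "g (src (res G p e1 e2 e3) e) = src (res H (g p) (f e1) (f e2) (f e1)) (f' e)
     \<and> g (tgt (res G p e1 e2 e3) e) = tgt (res H (g p) (f e1) (f e2) (f e1)) (f' e)"
    proof (cases "e = e3")
      case True then show ?thesis using fg(5) c' by (simp add: f'_def)
    next
      case False
      then have e': "e \<in> edges G" "e \<noteq> e1" "e \<noteq> e2" using e by auto
      then have "f e \<noteq> f e1" using injf c' by (auto simp: inj_on_def)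
      then show ?thesis using fg(5) e' False by (simp add: f'_def)
    qed
  qed
  have "graph_iso (res G p e1 e2 e3) (res H (g p) (f e1) (f e2) (f e1))"
    unfolding graph_iso_def using bf bg v ep st by blast
  moreover have "contract_step H (res H (g p) (f e1) (f e2) (f e1))"
    unfolding step_iff using cH by blast
  ultimately show ?thesis by blast
qed



lemma step_open': "open_graph G \<Longrightarrow> contract_step G G' \<Longrightarrow> open_graph G'"
  unfolding step_iff by (auto intro: step_open)

lemma step_finite': "finite_graph G \<Longrightarrow> contract_step G G' \<Longrightarrow> finite_graph G' \<and> card (edges G') < card (edges G)"
  unfolding step_iff by (auto dest: step_finite)

lemma steps_open: "contract_step\<^sup>*\<^sup>* G G' \<Longrightarrow> open_graph G \<Longrightarrow> open_graph G'"
  by (induction rule: rtranclp_induct) (auto intro: step_open')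

lemma steps_finite: "contract_step\<^sup>*\<^sup>* G G' \<Longrightarrow> finite_graph G \<Longrightarrow> finite_graph G' \<and> card (edges G') \<le> card (edges G)"
  by (induction rule: rtranclp_induct) (auto dest: step_finite')

lemma steps_card_eq: "contract_step\<^sup>*\<^sup>* G G' \<Longrightarrow> finite_graph G \<Longrightarrow> card (edges G') = card (edges G) \<Longrightarrow> G' = G"
proof (induction rule: converse_rtranclp_induct)
  case base then show ?case by simp
next
  case (step y z)
  from step_finite'[OF step.prems(1) step.hyps(1)] steps_finite[OF step.hyps(2)]
  show ?case using step.prems by auto
qed

lemma iso_steps: "contract_step\<^sup>*\<^sup>* G G' \<Longrightarrow> open_graph G \<Longrightarrow> open_graph H \<Longrightarrow> graph_iso G H
   \<Longrightarrow> \<exists>H'. contract_step\<^sup>*\<^sup>* H H' \<and> graph_iso G' H'"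
proof (induction rule: rtranclp_induct)
  case base then show ?case by blast
next
  case (step y z)
  then obtain H1 where h: "contract_step\<^sup>*\<^sup>* H H1" "graph_iso y H1" by blast
  have "open_graph y" using steps_open step by blast
  moreover have "open_graph H1" using steps_open h step by blast
  moreover obtain p e1 e2 e3 where "cond y p e1 e2 e3" "z = res y p e1 e2 e3"
    using step.hyps(2) unfolding step_iff by blast
  ultimately obtain H2 where "contract_step H1 H2" "graph_iso z H2"
    using iso_step[of y H1] h(2) by blast
  then show ?case using h by (meson rtranclp.rtrancl_into_rtrancl)
qed

lemma iso_agree:
  assumes "edges G = edges H" "verts G = verts H" "epts G = epts H"
    "\<forall>e\<in>edges G. src G e = src H e \<and> tgt G e = tgt H e"
  shows "graph_iso G H"
  unfolding graph_iso_def
  by (rule exI[of _ id], rule exI[of _ id]) (use assms in \<open>auto simp: nodes_def\<close>)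

lemma rename_iso:
  assumes "cond G p e1 e2 e3" "cond G p e1 e2 e3'"
  shows "graph_iso (res G p e1 e2 e3) (res G p e1 e2 e3')"
  unfolding graph_iso_def
proof (rule exI[of _ "id(e3 := e3')"], rule exI[of _ id], intro conjI)
  show "bij_betw (id(e3 := e3')) (edges (res G p e1 e2 e3)) (edges (res G p e1 e2 e3'))"
    using assms unfolding cond_def bij_betw_def inj_on_def by auto
qed (use assms in \<open>auto simp: cond_def nodes_def\<close>)



lemma lc_a:
  assumes "cond G p e1 e2 e1" "cond G q f1 f2 f1" "p \<noteq> q" "e2 \<noteq> f1" "e1 \<noteq> f2"
  shows "cond (res G p e1 e2 e1) q f1 f2 f1 \<and> cond (res G q f1 f2 f1) p e1 e2 e1
    \<and> graph_iso (res (res G p e1 e2 e1) q f1 f2 f1) (res (res G q f1 f2 f1) p e1 e2 e1)"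
proof -
  have d: "e1 \<noteq> f1" "e2 \<noteq> f2" using assms unfolding cond_def by auto
  show ?thesis
    apply (intro conjI)
      apply (use assms d in \<open>simp add: cond_def\<close>)
     apply (use assms d in \<open>simp add: cond_def\<close>)
    apply (rule iso_agree)
    using assms d by (auto simp: cond_def)
qed

lemma lc_b:
  assumes "cond G p e1 e2 e1" "cond G q e2 f2 e2" "p \<noteq> q" "e1 \<noteq> f2"
  shows "cond (res G p e1 e2 e1) q e1 f2 e1 \<and> cond (res G q e2 f2 e2) p e1 e2 e1
    \<and> graph_iso (res (res G p e1 e2 e1) q e1 f2 e1) (res (res G q e2 f2 e2) p e1 e2 e1)"
proof -
  have d: "e2 \<noteq> f2" using assms unfolding cond_def by auto
  show ?thesis
    apply (intro conjI)
      apply (use assms d in \<open>simp add: cond_def\<close>)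
     apply (use assms d in \<open>simp add: cond_def\<close>)
    apply (rule iso_agree)
    using assms d by (auto simp: cond_def)
qed

lemma lc_d:
  assumes og: "open_graph G" and c: "cond G p e1 e2 e1" "cond G q e2 e1 e2" and pq: "p \<noteq> q"
  shows "graph_iso (res G p e1 e2 e1) (res G q e2 e1 e2)"
proof -
  note o = open_facts[OF og]
  from c have c': "p \<in> epts G" "q \<in> epts G" "e1 \<in> edges G" "e2 \<in> edges G" "e1 \<noteq> e2" "tgt G e1 = p" "src G e2 = p"
     "tgt G e2 = q" "src G e1 = q"
    unfolding cond_def by auto
  have pv: "p \<notin> verts G" "q \<notin> verts G" using o(1) c' by auto
  have so: "src G e \<noteq> p \<and> src G e \<noteq> q \<and> tgt G e \<noteq> p \<and> tgt G e \<noteq> q" if "e \<in> edges G" "e \<noteq> e1" "e \<noteq> e2" for e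
    using o(4)[of e e2] o(4)[of e e1] o(5)[of e e1] o(5)[of e e2] c' that by auto
  define fE where "fE e = (if e = e1 then e2 else if e = e2 then e1 else e)" for e
  define fN where "fN v = (if v = p then q else if v = q then p else v)" for v
  show ?thesis unfolding graph_iso_def
  proof (rule exI[of _ fE], rule exI[of _ fN], intro conjI)
    show "bij_betw fE (edges (res G p e1 e2 e1)) (edges (res G q e2 e1 e2))"
      unfolding bij_betw_def inj_on_def fE_def using c' by (auto simp: image_iff)
    show "bij_betw fN (nodes (res G p e1 e2 e1)) (nodes (res G q e2 e1 e2))"
      unfolding bij_betw_def inj_on_def fN_def nodes_def using c' pq pv by (auto simp: image_iff)
    show "fN ` verts (res G p e1 e2 e1) \<subseteq> verts (res G q e2 e1 e2)"
      unfolding fN_def using pv by auto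
    show "fN ` epts (res G p e1 e2 e1) \<subseteq> epts (res G q e2 e1 e2)"
      unfolding fN_def using c' pq by auto
    show "\<forall>e\<in>edges (res G p e1 e2 e1).
       fN (src (res G p e1 e2 e1) e) = src (res G q e2 e1 e2) (fE e) \<and>
       fN (tgt (res G p e1 e2 e1) e) = tgt (res G q e2 e1 e2) (fE e)"
    proof
      fix e assume e: "e \<in> edges (res G p e1 e2 e1)"
      show "fN (src (res G p e1 e2 e1) e) = src (res G q e2 e1 e2) (fE e) \<and>
       fN (tgt (res G p e1 e2 e1) e) = tgt (res G q e2 e1 e2) (fE e)"
      proof (cases "e = e1")
        case True then show ?thesis using c' pq by (simp add: fE_def fN_def)
      next
        case False
        then have "e \<in> edges G" "e \<noteq> e2" using e by auto
        then show ?thesis using so[of e] False c' by (simp add: fE_def fN_def)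
      qed
    qed
  qed
qed



lemma cond_canon: "cond G p e1 e2 e3 \<Longrightarrow> cond G p e1 e2 e1"
  unfolding cond_def by auto

lemma step_of_cond: "cond G p e1 e2 e3 \<Longrightarrow> contract_step G (res G p e1 e2 e3)"
  unfolding step_iff by blast

lemma lc_canon:
  assumes og: "open_graph G" and c1: "cond G p e1 e2 e1" and c2: "cond G q f1 f2 f1" and pq: "p \<noteq> q"
  shows "\<exists>C D. contract_step\<^sup>*\<^sup>* (res G p e1 e2 e1) C \<and> contract_step\<^sup>*\<^sup>* (res G q f1 f2 f1) D \<and> graph_iso C D"
proof (cases "e2 = f1")
  case True
  note t = True
  show ?thesis
  proof (cases "e1 = f2")
    case True
    then show ?thesis using lc_d[OF og c1] c2 t pq by blast
  next
    case False
    then show ?thesis using lc_b[OF c1] c2 t pq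
      by (metis r_into_rtranclp step_of_cond)
  qed
next
  case False
  note f = False
  show ?thesis
  proof (cases "e1 = f2")
    case True
    have l: "cond (res G q f1 e1 f1) p f1 e2 f1 \<and> cond (res G p e1 e2 e1) q f1 e1 f1 \<and>
      graph_iso (res (res G q f1 e1 f1) p f1 e2 f1) (res (res G p e1 e2 e1) q f1 e1 f1)"
      using lc_b[of G q f1 e1 p e2] c1 c2 True f pq by auto
    have o1: "open_graph (res (res G q f1 e1 f1) p f1 e2 f1)"
      using l c2 True og by (auto intro: step_open)
    have o2: "open_graph (res (res G p e1 e2 e1) q f1 e1 f1)"
      using l c1 og by (auto intro: step_open)
    have "graph_iso (res (res G p e1 e2 e1) q f1 e1 f1) (res (res G q f1 e1 f1) p f1 e2 f1)"
      using iso_sym[OF _ o1 o2] l by blast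
    then show ?thesis using l True
      by (metis r_into_rtranclp step_of_cond)
  next
    case False
    then show ?thesis using lc_a[OF c1 c2 pq f]
      by (metis r_into_rtranclp step_of_cond)
  qed
qed

lemma lc:
  assumes og: "open_graph G" and sA: "contract_step G A" and sB: "contract_step G B"
  shows "\<exists>C D. contract_step\<^sup>*\<^sup>* A C \<and> contract_step\<^sup>*\<^sup>* B D \<and> graph_iso C D"
proof -
  obtain p e1 e2 e3 where a: "cond G p e1 e2 e3" "A = res G p e1 e2 e3" using sA unfolding step_iff by blast
  obtain q f1 f2 f3 where b: "cond G q f1 f2 f3" "B = res G q f1 f2 f3" using sB unfolding step_iff by blast
  note o = open_facts[OF og]
  show ?thesis
  proof (cases "p = q")
    case True
    then have "e1 = f1" "e2 = f2" using a b o(4)[of e2 f2] o(5)[of e1 f1] unfolding cond_def by auto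
    then have "graph_iso A B" using a b True rename_iso[of G p e1 e2 e3 f3] by simp
    then show ?thesis by blast
  next
    case False
    have ca: "cond G p e1 e2 e1" and cb: "cond G q f1 f2 f1" using cond_canon[OF a(1)] cond_canon[OF b(1)] by auto
    obtain C' D' where cd: "contract_step\<^sup>*\<^sup>* (res G p e1 e2 e1) C'" "contract_step\<^sup>*\<^sup>* (res G q f1 f2 f1) D'"
      "graph_iso C' D'" using lc_canon[OF og ca cb False] by blast
    have oA: "open_graph A" and oB: "open_graph B" using step_open[OF og a(1)] step_open[OF og b(1)] a(2) b(2) by auto
    have oA': "open_graph (res G p e1 e2 e1)" and oB': "open_graph (res G q f1 f2 f1)"
      using step_open[OF og ca] step_open[OF og cb] by auto
    have "graph_iso A (res G p e1 e2 e1)" using rename_iso[OF a(1) ca] a(2) by simp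
    then have iA: "graph_iso (res G p e1 e2 e1) A" using iso_sym oA oA' by blast
    have "graph_iso B (res G q f1 f2 f1)" using rename_iso[OF b(1) cb] b(2) by simp
    then have iB: "graph_iso (res G q f1 f2 f1) B" using iso_sym oB oB' by blast
    obtain C where C: "contract_step\<^sup>*\<^sup>* A C" "graph_iso C' C" using iso_steps[OF cd(1) oA' oA iA] by blast
    obtain D where D: "contract_step\<^sup>*\<^sup>* B D" "graph_iso D' D" using iso_steps[OF cd(2) oB' oB iB] by blast
    have oC: "open_graph C" "open_graph C'" using steps_open[OF C(1) oA] steps_open[OF cd(1) oA'] by auto
    have "graph_iso C D" using iso_trans[OF iso_sym[OF C(2) oC(2) oC(1)] iso_trans[OF cd(3) D(2)]] .
    then show ?thesis using C D by blast
  qed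
qed



lemma iso_card: "graph_iso G H \<Longrightarrow> card (edges G) = card (edges H)"
  unfolding graph_iso_def by (auto intro: bij_betw_same_card)

lemma rt_first: "r\<^sup>*\<^sup>* x y \<Longrightarrow> y \<noteq> x \<Longrightarrow> \<exists>z. r x z \<and> r\<^sup>*\<^sup>* z y"
  by (induction rule: converse_rtranclp_induct) auto

lemma confl:
  assumes "finite_graph G" "open_graph G" "contract_step\<^sup>*\<^sup>* G G1" "contract_step\<^sup>*\<^sup>* G G2"
  shows "\<exists>X Y. contract_step\<^sup>*\<^sup>* G1 X \<and> contract_step\<^sup>*\<^sup>* G2 Y \<and> graph_iso X Y"
  using assms
proof (induction "card (edges G)" arbitrary: G G1 G2 rule: less_induct)
  case less
  show ?case
  proof (cases "G1 = G")
    case True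
    then have "contract_step\<^sup>*\<^sup>* G1 G2" using less.prems(4) by simp
    moreover have "contract_step\<^sup>*\<^sup>* G2 G2" by simp
    ultimately show ?thesis using iso_refl[of G2] by blast
  next
    case n1: False
    show ?thesis
    proof (cases "G2 = G")
      case True
      then have "contract_step\<^sup>*\<^sup>* G2 G1" using less.prems(3) by simp
      moreover have "contract_step\<^sup>*\<^sup>* G1 G1" by simp
      ultimately show ?thesis using iso_refl[of G1] by blast
    next
      case n2: False
      obtain A where A: "contract_step G A" "contract_step\<^sup>*\<^sup>* A G1"
        using rt_first[OF less.prems(3) n1] by blast
      obtain B where B: "contract_step G B" "contract_step\<^sup>*\<^sup>* B G2"
        using rt_first[OF less.prems(4) n2] by blast
      have fA: "finite_graph A" "card (edges A) < card (edges G)" using step_finite'[OF less.prems(1) A(1)] by auto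
      have fB: "finite_graph B" "card (edges B) < card (edges G)" using step_finite'[OF less.prems(1) B(1)] by auto
      have oA: "open_graph A" using step_open'[OF less.prems(2) A(1)] .
      have oB: "open_graph B" using step_open'[OF less.prems(2) B(1)] .
      obtain C D where CD: "contract_step\<^sup>*\<^sup>* A C" "contract_step\<^sup>*\<^sup>* B D" "graph_iso C D"
        using lc[OF less.prems(2) A(1) B(1)] by blast
      have oC: "open_graph C" using steps_open[OF CD(1) oA] .
      have oD: "open_graph D" using steps_open[OF CD(2) oB] .
      obtain X1 Y1 where XY1: "contract_step\<^sup>*\<^sup>* G1 X1" "contract_step\<^sup>*\<^sup>* C Y1" "graph_iso X1 Y1"
        using less.hyps[OF fA(2) fA(1) oA A(2) CD(1)] by blast
      have oY1: "open_graph Y1" using steps_open[OF XY1(2) oC] .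
      have oG1: "open_graph G1" using steps_open[OF A(2) oA] .
      have oX1: "open_graph X1" using steps_open[OF XY1(1) oG1] .
      obtain Y1' where Y1': "contract_step\<^sup>*\<^sup>* D Y1'" "graph_iso Y1 Y1'"
        using iso_steps[OF XY1(2) oC oD CD(3)] by blast
      have oY1': "open_graph Y1'" using steps_open[OF Y1'(1) oD] .
      have BY: "contract_step\<^sup>*\<^sup>* B Y1'" using CD(2) Y1'(1) by simp
      obtain Z W where ZW: "contract_step\<^sup>*\<^sup>* G2 Z" "contract_step\<^sup>*\<^sup>* Y1' W" "graph_iso Z W"
        using less.hyps[OF fB(2) fB(1) oB B(2) BY] by blast
      have oG2: "open_graph G2" using steps_open[OF B(2) oB] .
      have oZ: "open_graph Z" using steps_open[OF ZW(1) oG2] .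
      have oW: "open_graph W" using steps_open[OF ZW(2) oY1'] .
      have iYX: "graph_iso Y1' X1" using iso_sym[OF iso_trans[OF XY1(3) Y1'(2)] oX1 oY1'] .
      obtain X' where X': "contract_step\<^sup>*\<^sup>* X1 X'" "graph_iso W X'"
        using iso_steps[OF ZW(2) oY1' oX1 iYX] by blast
      have oX': "open_graph X'" using steps_open[OF X'(1) oX1] .
      have "graph_iso X' Z" using iso_trans[OF iso_sym[OF X'(2) oW oX'] iso_sym[OF ZW(3) oZ oW]] .
      moreover have "contract_step\<^sup>*\<^sup>* G1 X'" using XY1(1) X'(1) by simp
      ultimately show ?thesis using ZW(1) by blast
    qed
  qed
qed



lemma no_desc: "(\<forall>i. g (Suc i) < (g i :: nat)) \<Longrightarrow> False"
proof -
  assume a: "\<forall>i. g (Suc i) < g i"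
  have "g i + i \<le> g 0" for i
  proof (induction i)
    case 0 show ?case by simp
  next
    case (Suc i)
    have "g (Suc i) < g i" using a by blast
    then show ?case using Suc by simp
  qed
  from this[of "Suc (g 0)"] show False by simp
qed

theorem proposition1:
  shows
   "(\<forall>G :: ('e, 'v) pgraph. fin_open_graph G \<longrightarrow> G \<preceq>\<^sub>c G)
  \<and> (\<forall>G H K :: ('e, 'v) pgraph. fin_open_graph G \<and> fin_open_graph H \<and> fin_open_graph K
        \<longrightarrow> K \<preceq>\<^sub>c H \<longrightarrow> H \<preceq>\<^sub>c G \<longrightarrow> K \<preceq>\<^sub>c G)
  \<and> (\<forall>G H :: ('e, 'v) pgraph. fin_open_graph G \<and> fin_open_graph H
        \<longrightarrow> H \<preceq>\<^sub>c G \<longrightarrow> G \<preceq>\<^sub>c H \<longrightarrow> graph_iso G H)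
  \<and> \<not> (\<exists>f :: nat \<Rightarrow> ('e, 'v) pgraph. \<forall>i. fin_open_graph (f i)
        \<and> f (Suc i) \<preceq>\<^sub>c f i \<and> \<not> graph_iso (f (Suc i)) (f i))
  \<and> (\<forall>G H1 H2 :: ('e, 'v) pgraph. fin_open_graph G \<and> fin_open_graph H1 \<and> fin_open_graph H2
        \<longrightarrow> H1 \<preceq>\<^sub>c G \<longrightarrow> H2 \<preceq>\<^sub>c G
        \<longrightarrow> (\<exists>K :: ('e, 'v) pgraph. open_graph K \<and> K \<preceq>\<^sub>c H1 \<and> K \<preceq>\<^sub>c H2))"
proof (intro conjI allI impI)
  fix G :: "('e, 'v) pgraph"
  show "G \<preceq>\<^sub>c G" unfolding contracts_to_def using iso_refl by blast
next
  fix G H K :: "('e, 'v) pgraph"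
  assume f: "fin_open_graph G \<and> fin_open_graph H \<and> fin_open_graph K" and kh: "K \<preceq>\<^sub>c H" and hg: "H \<preceq>\<^sub>c G"
  obtain H' where H': "contract_step\<^sup>*\<^sup>* H H'" "graph_iso K H'" using kh unfolding contracts_to_def by blast
  obtain G' where G': "contract_step\<^sup>*\<^sup>* G G'" "graph_iso H G'" using hg unfolding contracts_to_def by blast
  have oH: "open_graph H" and oG: "open_graph G" using f by (auto simp: fin_open_graph_def)
  have oG': "open_graph G'" using steps_open[OF G'(1) oG] .
  obtain G'' where "contract_step\<^sup>*\<^sup>* G' G''" "graph_iso H' G''" using iso_steps[OF H'(1) oH oG' G'(2)] by blast
  then have "contract_step\<^sup>*\<^sup>* G G''" "graph_iso K G''"
    using G'(1) H'(2) iso_trans[OF H'(2)] by auto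
  then show "K \<preceq>\<^sub>c G" unfolding contracts_to_def by blast
next
  fix G H :: "('e, 'v) pgraph"
  assume f: "fin_open_graph G \<and> fin_open_graph H" and hg: "H \<preceq>\<^sub>c G" and gh: "G \<preceq>\<^sub>c H"
  obtain G' where G': "contract_step\<^sup>*\<^sup>* G G'" "graph_iso H G'" using hg unfolding contracts_to_def by blast
  obtain H' where H': "contract_step\<^sup>*\<^sup>* H H'" "graph_iso G H'" using gh unfolding contracts_to_def by blast
  have fG: "finite_graph G" "open_graph G" and fH: "finite_graph H" "open_graph H" using f by (auto simp: fin_open_graph_def)
  have "card (edges G') \<le> card (edges G)" using steps_finite[OF G'(1) fG(1)] by simp
  moreover have "card (edges H') \<le> card (edges H)" using steps_finite[OF H'(1) fH(1)] by simp
  moreover note iso_card[OF G'(2)] iso_card[OF H'(2)]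
  ultimately have "card (edges G') = card (edges G)" by simp
  then have "G' = G" using steps_card_eq[OF G'(1) fG(1)] by simp
  then have "graph_iso H G" using G'(2) by simp
  then show "graph_iso G H" using iso_sym fH(2) fG(2) by blast
next
  show "\<not> (\<exists>f :: nat \<Rightarrow> ('e, 'v) pgraph. \<forall>i. fin_open_graph (f i)
        \<and> f (Suc i) \<preceq>\<^sub>c f i \<and> \<not> graph_iso (f (Suc i)) (f i))"
  proof
    assume "\<exists>f :: nat \<Rightarrow> ('e, 'v) pgraph. \<forall>i. fin_open_graph (f i)
        \<and> f (Suc i) \<preceq>\<^sub>c f i \<and> \<not> graph_iso (f (Suc i)) (f i)"
    then obtain f :: "nat \<Rightarrow> ('e, 'v) pgraph" where f: "\<And>i. fin_open_graph (f i)"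
      "\<And>i. f (Suc i) \<preceq>\<^sub>c f i" "\<And>i. \<not> graph_iso (f (Suc i)) (f i)" by blast
    have "card (edges (f (Suc i))) < card (edges (f i))" for i
    proof -
      obtain G' where G': "contract_step\<^sup>*\<^sup>* (f i) G'" "graph_iso (f (Suc i)) G'"
        using f(2)[of i] unfolding contracts_to_def by blast
      have fi: "finite_graph (f i)" using f(1) by (simp add: fin_open_graph_def)
      have "G' \<noteq> f i" using G'(2) f(3)[of i] by auto
      then have "card (edges G') \<noteq> card (edges (f i))" using steps_card_eq[OF G'(1) fi] by auto
      moreover have "card (edges G') \<le> card (edges (f i))" using steps_finite[OF G'(1) fi] by simp
      ultimately show ?thesis using iso_card[OF G'(2)] by simp
    qed
    then show False using no_desc[of "\<lambda>i. card (edges (f i))"] by blast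
  qed
next
  fix G H1 H2 :: "('e, 'v) pgraph"
  assume f: "fin_open_graph G \<and> fin_open_graph H1 \<and> fin_open_graph H2" and h1: "H1 \<preceq>\<^sub>c G" and h2: "H2 \<preceq>\<^sub>c G"
  obtain G1 where G1: "contract_step\<^sup>*\<^sup>* G G1" "graph_iso H1 G1" using h1 unfolding contracts_to_def by blast
  obtain G2 where G2: "contract_step\<^sup>*\<^sup>* G G2" "graph_iso H2 G2" using h2 unfolding contracts_to_def by blast
  have fG: "finite_graph G" "open_graph G" and oH1: "open_graph H1" and oH2: "open_graph H2"
    using f by (auto simp: fin_open_graph_def)
  have oG1: "open_graph G1" using steps_open[OF G1(1) fG(2)] .
  have oG2: "open_graph G2" using steps_open[OF G2(1) fG(2)] .
  obtain X Y where XY: "contract_step\<^sup>*\<^sup>* G1 X" "contract_step\<^sup>*\<^sup>* G2 Y" "graph_iso X Y"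
    using confl[OF fG G1(1) G2(1)] by blast
  obtain X' where X': "contract_step\<^sup>*\<^sup>* H1 X'" "graph_iso X X'"
    using iso_steps[OF XY(1) oG1 oH1 iso_sym[OF G1(2) oH1 oG1]] by blast
  obtain Y' where Y': "contract_step\<^sup>*\<^sup>* H2 Y'" "graph_iso Y Y'"
    using iso_steps[OF XY(2) oG2 oH2 iso_sym[OF G2(2) oH2 oG2]] by blast
  have oX: "open_graph X" using steps_open[OF XY(1) oG1] .
  have oX': "open_graph X'" using steps_open[OF X'(1) oH1] .
  have "graph_iso X' Y'" using iso_trans[OF iso_sym[OF X'(2) oX oX'] iso_trans[OF XY(3) Y'(2)]] .
  then show "\<exists>K :: ('e, 'v) pgraph. open_graph K \<and> K \<preceq>\<^sub>c H1 \<and> K \<preceq>\<^sub>c H2"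
    unfolding contracts_to_def using oX' X'(1) Y'(1) iso_refl by blast
qed


end
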